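(* There exists a constant $c_0$, depending only on $s$ and $d$, such that the following holds whenever $c_{db}\ge c_0$. Let $Q_0,Q_1,\dots,Q_n\in\mathcal D$ be cubes such that $Q_j$ is a child of $Q_{j-1}$ for $1\le j\le n$, and suppose that $Q_j$ is not $p$-doubling (with constant $c_{db}$) for $1\le j\le n$. Then $$\Theta(Q_j)\le 2^{-j/2}\,p(Q_0)\qquad\text{for }0\le j\le n.$$
   Context: $0<s<d$. $E\subset\mathbb R^d$ is a Cantor set built from a compact $Q^0$ by repeatedly choosing, inside each closed "cube" $Q$ of generation $k$, a finite nonempty family of closed children (the cubes of generation $k+1$), such that each child $Q'$ of $Q$ satisfies $\frac18\ell(Q)\le\ell(Q')\le\frac13\ell(Q)$, where $\ell(Q)=\operatorname{diam}(Q)$, and distinct children of $Q$ are at distance $\ge c_{sep}\ell(Q)$. $\mathcal D$ is the family of all such cubes. $\mu$ is a finite Borel measure supported on $E$ with $\mu(Q)>0$ for all $Q\in\mathcal D$. $\Theta(Q)=\mu(Q)/\ell(Q)^s$, $p(Q)=\sum_{P\in\mathcal D,\,P\supset Q}\frac{\ell(Q)}{\ell(P)}\Theta(P)$, and $Q$ is $p$-doubling with constant $c_{db}$ if $p(Q)\le c_{db}\Theta(Q)$. *)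

theory Defs
  imports "HOL-Analysis.Analysis"
begin

primrec cantor_gen :: "'a set \<Rightarrow> ('a set \<Rightarrow> 'a set set) \<Rightarrow> nat \<Rightarrow> 'a set set" where
  "cantor_gen Q0 ch 0 = {Q0}"
| "cantor_gen Q0 ch (Suc k) = \<Union> (ch ` cantor_gen Q0 ch k)"

definition cantor_cubes :: "'a set \<Rightarrow> ('a set \<Rightarrow> 'a set set) \<Rightarrow> 'a set set" where
  "cantor_cubes Q0 ch = (\<Union>k. cantor_gen Q0 ch k)"

definition cantor_set :: "'a set \<Rightarrow> ('a set \<Rightarrow> 'a set set) \<Rightarrow> 'a set" where
  "cantor_set Q0 ch = (\<Inter>k. \<Union> (cantor_gen Q0 ch k))"

definition cantor_system :: "'a::euclidean_space set \<Rightarrow> ('a set \<Rightarrow> 'a set set) \<Rightarrow> real \<Rightarrow> bool" where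
  "cantor_system Q0 ch csep \<longleftrightarrow>
     compact Q0 \<and> csep > 0 \<and>
     (\<forall>Q\<in>cantor_cubes Q0 ch.
        finite (ch Q) \<and> ch Q \<noteq> {} \<and>
        (\<forall>Q'\<in>ch Q. closed Q' \<and> Q' \<subseteq> Q \<and>
            diameter Q / 8 \<le> diameter Q' \<and> diameter Q' \<le> diameter Q / 3) \<and>
        (\<forall>Q1\<in>ch Q. \<forall>Q2\<in>ch Q. Q1 \<noteq> Q2 \<longrightarrow> setdist Q1 Q2 \<ge> csep * diameter Q))"

text \<open>Density Theta(Q) = mu(Q) / l(Q)^s with l(Q) = diam Q.\<close>
definition Theta :: "'a::euclidean_space measure \<Rightarrow> real \<Rightarrow> 'a set \<Rightarrow> real" where
  "Theta \<mu> s Q = measure \<mu> Q / (diameter Q) powr s"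

definition pdens :: "'a::euclidean_space measure \<Rightarrow> real \<Rightarrow> 'a set set \<Rightarrow> 'a set \<Rightarrow> real" where
  "pdens \<mu> s D Q = (\<Sum>P\<in>{P\<in>D. Q \<subseteq> P}. diameter Q / diameter P * Theta \<mu> s P)"

definition p_doubling :: "'a::euclidean_space measure \<Rightarrow> real \<Rightarrow> 'a set set \<Rightarrow> real \<Rightarrow> 'a set \<Rightarrow> bool" where
  "p_doubling \<mu> s D cdb Q \<longleftrightarrow> pdens \<mu> s D Q \<le> cdb * Theta \<mu> s Q"

end

theory Submission
  imports Defs
begin

lemma diam_nonneg: "bounded S \<Longrightarrow> 0 \<le> diameter (S::'a::metric_space set)"
  by (rule diameter_ge_0)

lemma gen_sub_cubes: "Q \<in> cantor_gen Q0 ch k \<Longrightarrow> Q \<in> cantor_cubes Q0 ch"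
  by (auto simp: cantor_cubes_def)

lemma cube_gen: "Q \<in> cantor_cubes Q0 ch \<Longrightarrow> \<exists>k. Q \<in> cantor_gen Q0 ch k"
  by (auto simp: cantor_cubes_def)

lemma child_cube: "R \<in> cantor_cubes Q0 ch \<Longrightarrow> Q \<in> ch R \<Longrightarrow> Q \<in> cantor_cubes Q0 ch"
  by (auto simp: cantor_cubes_def) (metis UN_I cantor_gen.simps(2))

lemma child_props:
  assumes "cantor_system Q0 ch csep" "R \<in> cantor_cubes Q0 ch" "Q \<in> ch R"
  shows "Q \<subseteq> R \<and> diameter Q \<le> diameter R / 3"
  using assms unfolding cantor_system_def by blast

lemma sep_prop:
  assumes "cantor_system Q0 ch csep" "R \<in> cantor_cubes Q0 ch" "A \<in> ch R" "B \<in> ch R" "A \<noteq> B"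
  shows "setdist A B \<ge> csep * diameter R"
  using assms unfolding cantor_system_def by auto

lemma csep_pos: "cantor_system Q0 ch csep \<Longrightarrow> csep > 0"
  unfolding cantor_system_def by auto

lemma gen_ancestor:
  assumes "cantor_system Q0 ch csep"
  shows "Q \<in> cantor_gen Q0 ch (k + d) \<Longrightarrow> \<exists>Q'\<in>cantor_gen Q0 ch k. Q \<subseteq> Q'"
proof (induction d arbitrary: Q)
  case 0
  then show ?case by auto
next
  case (Suc d)
  then obtain R where R: "R \<in> cantor_gen Q0 ch (k + d)" "Q \<in> ch R" by auto
  then have "Q \<subseteq> R" using child_props[OF assms gen_sub_cubes] by blast
  with Suc.IH[OF R(1)] show ?case by blast
qed

lemma cube_sub_Q0:
  assumes "cantor_system Q0 ch csep" "Q \<in> cantor_gen Q0 ch k"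
  shows "Q \<subseteq> Q0"
  using gen_ancestor[OF assms(1), of Q 0 k] assms(2) by auto

lemma gen_disj:
  assumes cs: "cantor_system Q0 ch csep" and ne: "\<forall>Q\<in>cantor_cubes Q0 ch. Q \<noteq> {}"
  shows "A \<in> cantor_gen Q0 ch k \<Longrightarrow> B \<in> cantor_gen Q0 ch k \<Longrightarrow> A = B \<or> A \<inter> B = {}"
proof (induction k arbitrary: A B)
  case 0
  then show ?case by auto
next
  case (Suc k)
  from Suc.prems obtain A0 B0 where A0: "A0 \<in> cantor_gen Q0 ch k" "A \<in> ch A0"
    and B0: "B0 \<in> cantor_gen Q0 ch k" "B \<in> ch B0" by auto
  have A0D: "A0 \<in> cantor_cubes Q0 ch" and B0D: "B0 \<in> cantor_cubes Q0 ch"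
    using A0 B0 gen_sub_cubes by blast+
  have sA: "A \<subseteq> A0" and sB: "B \<subseteq> B0"
    using child_props[OF cs A0D A0(2)] child_props[OF cs B0D B0(2)] by auto
  show ?case
  proof (cases "A0 = B0")
    case False
    with Suc.IH[OF A0(1) B0(1)] sA sB show ?thesis by blast
  next
    case True
    show ?thesis
    proof (rule ccontr)
      assume H: "\<not> (A = B \<or> A \<inter> B = {})"
      then obtain z where z: "z \<in> A" "z \<in> B" by blast
      have "A \<noteq> B" using H by blast
      then have sd: "setdist A B \<ge> csep * diameter A0"
        using sep_prop[OF cs A0D A0(2)] B0(2) True by blast
      have "setdist A B = 0" using z by (rule setdist_eq_0I)
      moreover have "csep > 0" using csep_pos[OF cs] .
      ultimately have d0: "diameter A0 \<le> 0" using sd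
        by (simp add: mult_le_0_iff)
      have "compact Q0" using cs unfolding cantor_system_def by blast
      then have bA0: "bounded A0"
        using cube_sub_Q0[OF cs A0(1)] compact_imp_bounded bounded_subset by blast
      from H obtain y where y: "(y \<in> A \<and> y \<notin> B) \<or> (y \<in> B \<and> y \<notin> A)" by blast
      then have "y \<in> A0" using sA sB True by blast
      moreover have "z \<in> A0" using z sA by blast
      ultimately have "dist y z \<le> diameter A0" using bA0 diameter_bounded_bound by blast
      then have "y = z" using d0 by (metis dist_le_zero_iff order_trans)
      then show False using y z by blast
    qed
  qed
qed

lemma gen_finite:
  assumes "cantor_system Q0 ch csep"
  shows "finite (cantor_gen Q0 ch k)"
proof (induction k)
  case 0 then show ?case by simp
next
  case (Suc k)
  have "\<forall>R\<in>cantor_gen Q0 ch k. finite (ch R)"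
    using assms gen_sub_cubes unfolding cantor_system_def by blast
  with Suc show ?case by simp
qed

lemma anc_finite:
  assumes cs: "cantor_system Q0 ch csep" and ne: "\<forall>Q\<in>cantor_cubes Q0 ch. Q \<noteq> {}"
    and Q: "Q \<in> cantor_cubes Q0 ch"
  shows "finite {P\<in>cantor_cubes Q0 ch. Q \<subseteq> P}"
proof -
  obtain m where m: "Q \<in> cantor_gen Q0 ch m" using cube_gen[OF Q] by blast
  have "{P\<in>cantor_cubes Q0 ch. Q \<subseteq> P} \<subseteq> insert Q (\<Union>k<m. cantor_gen Q0 ch k)"
  proof
    fix P assume P: "P \<in> {P\<in>cantor_cubes Q0 ch. Q \<subseteq> P}"
    then obtain k where k: "P \<in> cantor_gen Q0 ch k" "Q \<subseteq> P"
      using cube_gen by blast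
    show "P \<in> insert Q (\<Union>k<m. cantor_gen Q0 ch k)"
    proof (cases "k < m")
      case True then show ?thesis using k by blast
    next
      case False
      then obtain d where "k = m + d" by (metis le_add_diff_inverse not_le)
      then obtain P' where P': "P' \<in> cantor_gen Q0 ch m" "P \<subseteq> P'"
        using gen_ancestor[OF cs] k by blast
      have "Q \<noteq> {}" using ne Q by blast
      then have "Q = P'" using gen_disj[OF cs ne m P'(1)] k P' by blast
      then show ?thesis using k P' by blast
    qed
  qed
  moreover have "finite (insert Q (\<Union>k<m. cantor_gen Q0 ch k))"
    using gen_finite[OF cs] by simp
  ultimately show ?thesis by (rule finite_subset)
qed

lemma anc_step:
  assumes cs: "cantor_system Q0 ch csep" and ne: "\<forall>Q\<in>cantor_cubes Q0 ch. Q \<noteq> {}"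
    and R: "R \<in> cantor_cubes Q0 ch" and Q: "Q \<in> ch R"
  shows "{P\<in>cantor_cubes Q0 ch. Q \<subseteq> P} \<subseteq> insert Q {P\<in>cantor_cubes Q0 ch. R \<subseteq> P}"
proof
  fix P assume P: "P \<in> {P\<in>cantor_cubes Q0 ch. Q \<subseteq> P}"
  then obtain k where k: "P \<in> cantor_gen Q0 ch k" "Q \<subseteq> P" using cube_gen by blast
  obtain m where m: "R \<in> cantor_gen Q0 ch m" using cube_gen[OF R] by blast
  have Qm: "Q \<in> cantor_gen Q0 ch (Suc m)" using m Q by auto
  have QD: "Q \<in> cantor_cubes Q0 ch" using child_cube[OF R Q] .
  have Qne: "Q \<noteq> {}" using ne QD by blast
  have QR: "Q \<subseteq> R" using child_props[OF cs R Q] by blast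
  show "P \<in> insert Q {P\<in>cantor_cubes Q0 ch. R \<subseteq> P}"
  proof (cases "k \<le> m")
    case True
    then obtain d where "m = k + d" by (metis le_add_diff_inverse)
    then obtain R' where R': "R' \<in> cantor_gen Q0 ch k" "R \<subseteq> R'"
      using gen_ancestor[OF cs] m by blast
    have "R' = P" using gen_disj[OF cs ne R'(1) k(1)] R' k QR Qne by blast
    then show ?thesis using R' P by blast
  next
    case False
    then obtain d where "k = Suc m + d" by (metis Suc_leI le_add_diff_inverse not_le)
    then obtain P' where P': "P' \<in> cantor_gen Q0 ch (Suc m)" "P \<subseteq> P'"
      using gen_ancestor[OF cs] k by blast
    have "P' = Q" using gen_disj[OF cs ne P'(1) Qm] P' k Qne by blast
    then show ?thesis using P' k by blast
  qed
qed

lemma cube_bounded: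
  assumes cs: "cantor_system Q0 ch csep" and Q: "Q \<in> cantor_cubes Q0 ch"
  shows "bounded Q"
proof -
  obtain k where "Q \<in> cantor_gen Q0 ch k" using cube_gen[OF Q] by blast
  then have "Q \<subseteq> Q0" using cube_sub_Q0[OF cs] by blast
  moreover have "compact Q0" using cs unfolding cantor_system_def by blast
  ultimately show ?thesis using compact_imp_bounded bounded_subset by blast
qed

lemma Theta_nonneg: "0 \<le> Theta \<mu> s Q"
  unfolding Theta_def by simp

lemma pdens_nonneg:
  assumes "\<forall>P\<in>D. bounded P" "bounded Q"
  shows "0 \<le> pdens \<mu> s D Q"
  unfolding pdens_def using assms
  by (intro sum_nonneg mult_nonneg_nonneg divide_nonneg_nonneg diam_nonneg Theta_nonneg) auto

lemma Theta_le_pdens: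
  assumes "Q \<in> D" "finite {P\<in>D. Q \<subseteq> P}" "\<forall>P\<in>D. bounded P"
  shows "Theta \<mu> s Q \<le> pdens \<mu> s D Q"
proof -
  have "diameter Q / diameter Q * Theta \<mu> s Q = Theta \<mu> s Q"
    by (cases "diameter Q = 0") (auto simp: Theta_def)
  moreover have "diameter Q / diameter Q * Theta \<mu> s Q \<le> pdens \<mu> s D Q"
    unfolding pdens_def
    by (rule member_le_sum) (use assms in \<open>auto intro!: mult_nonneg_nonneg divide_nonneg_nonneg diam_nonneg Theta_nonneg\<close>)
  ultimately show ?thesis by metis
qed

lemma pdens_step:
  assumes cs: "cantor_system Q0 ch csep" and ne: "\<forall>Q\<in>cantor_cubes Q0 ch. Q \<noteq> {}"
    and R: "R \<in> cantor_cubes Q0 ch" and Q: "Q \<in> ch R"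
  shows "pdens \<mu> s (cantor_cubes Q0 ch) Q \<le> Theta \<mu> s Q + pdens \<mu> s (cantor_cubes Q0 ch) R / 3"
proof -
  define D where "D = cantor_cubes Q0 ch"
  define f where "f P = diameter Q / diameter P * Theta \<mu> s P" for P
  have bD: "\<forall>P\<in>D. bounded P" using cube_bounded[OF cs] D_def by blast
  have QD: "Q \<in> D" using child_cube[OF R Q] D_def by blast
  have RD: "R \<in> D" using R D_def by blast
  have fnn: "\<And>P. P \<in> D \<Longrightarrow> 0 \<le> f P" unfolding f_def using bD QD
    by (intro mult_nonneg_nonneg divide_nonneg_nonneg diam_nonneg Theta_nonneg) auto
  have finR: "finite {P\<in>D. R \<subseteq> P}" using anc_finite[OF cs ne R] D_def by simp
  have sub: "{P\<in>D. Q \<subseteq> P} \<subseteq> insert Q {P\<in>D. R \<subseteq> P}" using anc_step[OF cs ne R Q] D_def by simp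
  have "pdens \<mu> s D Q = sum f {P\<in>D. Q \<subseteq> P}" unfolding pdens_def f_def by simp
  also have "\<dots> \<le> sum f (insert Q {P\<in>D. R \<subseteq> P})"
    by (rule sum_mono2) (use finR sub fnn QD in auto)
  also have "\<dots> \<le> f Q + sum f {P\<in>D. R \<subseteq> P}"
    using finR fnn QD by (cases "Q \<in> {P\<in>D. R \<subseteq> P}") (auto simp: insert_absorb)
  also have "f Q \<le> Theta \<mu> s Q"
    unfolding f_def by (cases "diameter Q = 0") (auto simp: Theta_def)
  also have "sum f {P\<in>D. R \<subseteq> P} \<le> pdens \<mu> s D R / 3"
  proof -
    have dQ: "diameter Q \<le> diameter R / 3" "0 \<le> diameter Q" using child_props[OF cs R Q] diam_nonneg bD QD by auto
    show ?thesis
    proof (cases "diameter R = 0")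
      case True
      then have "diameter Q = 0" using dQ by simp
      then have "sum f {P\<in>D. R \<subseteq> P} = 0" unfolding f_def by simp
      then show ?thesis using pdens_nonneg[OF bD, of R \<mu> s] bD RD by simp
    next
      case False
      have "sum f {P\<in>D. R \<subseteq> P} = (diameter Q / diameter R) * pdens \<mu> s D R"
        unfolding pdens_def sum_distrib_left f_def
        by (rule sum.cong) (use False in auto)
      also have "\<dots> \<le> (1/3) * pdens \<mu> s D R"
        using False dQ diam_nonneg[of R] pdens_nonneg[OF bD, of R \<mu> s] bD RD
        by (intro mult_right_mono) (auto simp: field_simps)
      finally show ?thesis by simp
    qed
  qed
  finally show ?thesis unfolding D_def by simp
qed

theorem lemma2p1:
  fixes s :: real
  assumes "0 < s" and "s < real DIM('a::euclidean_space)"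
  shows "\<exists>c0::real. \<forall>(Q0::'a set) ch csep (\<mu>::'a measure) cdb (n::nat) (Qs::nat \<Rightarrow> 'a set).
           cantor_system Q0 ch csep \<and>
           finite_measure \<mu> \<and> sets \<mu> = sets borel \<and>
           emeasure \<mu> (UNIV - cantor_set Q0 ch) = 0 \<and>
           (\<forall>Q\<in>cantor_cubes Q0 ch. emeasure \<mu> Q > 0) \<and>
           cdb \<ge> c0 \<and>
           Qs 0 \<in> cantor_cubes Q0 ch \<and>
           (\<forall>j\<in>{1..n}. Qs j \<in> ch (Qs (j - 1))) \<and>
           (\<forall>j\<in>{1..n}. \<not> p_doubling \<mu> s (cantor_cubes Q0 ch) cdb (Qs j))
           \<longrightarrow> (\<forall>j\<in>{0..n}. Theta \<mu> s (Qs j)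
                  \<le> 2 powr (- real j / 2) * pdens \<mu> s (cantor_cubes Q0 ch) (Qs 0))"
proof (intro exI[of _ 3] allI impI)
  fix Q0 :: "'a set" and ch csep and \<mu> :: "'a measure" and cdb and n :: nat and Qs :: "nat \<Rightarrow> 'a set"
  assume H: "cantor_system Q0 ch csep \<and>
           finite_measure \<mu> \<and> sets \<mu> = sets borel \<and>
           emeasure \<mu> (UNIV - cantor_set Q0 ch) = 0 \<and>
           (\<forall>Q\<in>cantor_cubes Q0 ch. emeasure \<mu> Q > 0) \<and>
           cdb \<ge> 3 \<and>
           Qs 0 \<in> cantor_cubes Q0 ch \<and>
           (\<forall>j\<in>{1..n}. Qs j \<in> ch (Qs (j - 1))) \<and>
           (\<forall>j\<in>{1..n}. \<not> p_doubling \<mu> s (cantor_cubes Q0 ch) cdb (Qs j))"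
  define D where "D = cantor_cubes Q0 ch"
  have cs: "cantor_system Q0 ch csep" using H by blast
  have pos: "\<forall>Q\<in>cantor_cubes Q0 ch. emeasure \<mu> Q > 0" using H by blast
  have c3: "cdb \<ge> 3" using H by blast
  have q0: "Qs 0 \<in> cantor_cubes Q0 ch" using H by blast
  have chn: "\<forall>j\<in>{1..n}. Qs j \<in> ch (Qs (j - 1))" using H by blast
  have ndb: "\<forall>j\<in>{1..n}. \<not> p_doubling \<mu> s (cantor_cubes Q0 ch) cdb (Qs j)" using H by blast
  have ne: "\<forall>Q\<in>cantor_cubes Q0 ch. Q \<noteq> {}"
  proof
    fix Q assume "Q \<in> cantor_cubes Q0 ch"
    then have "emeasure \<mu> Q > 0" using pos by blast
    then show "Q \<noteq> {}" by auto
  qed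
  have inD: "j \<le> n \<Longrightarrow> Qs j \<in> D" for j
  proof (induction j)
    case 0 then show ?case using q0 D_def by blast
  next
    case (Suc j)
    then have "Qs (Suc j) \<in> ch (Qs j)" using chn[rule_format, of "Suc j"] by simp
    with Suc show ?case using child_cube D_def by simp
  qed
  have decay: "j \<le> n \<Longrightarrow> pdens \<mu> s D (Qs j) \<le> (1/2)^j * pdens \<mu> s D (Qs 0)" for j
  proof (induction j)
    case 0 then show ?case by simp
  next
    case (Suc j)
    have ch: "Qs (Suc j) \<in> ch (Qs j)" using chn[rule_format, of "Suc j"] Suc.prems by simp
    have st: "pdens \<mu> s D (Qs (Suc j)) \<le> Theta \<mu> s (Qs (Suc j)) + pdens \<mu> s D (Qs j) / 3"
      using pdens_step[OF cs ne _ ch] inD[of j] Suc.prems D_def by simp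
    have nd: "pdens \<mu> s D (Qs (Suc j)) > cdb * Theta \<mu> s (Qs (Suc j))"
      using ndb[rule_format, of "Suc j"] Suc.prems D_def unfolding p_doubling_def by simp
    have "cdb * Theta \<mu> s (Qs (Suc j)) \<ge> 3 * Theta \<mu> s (Qs (Suc j))"
      using c3 Theta_nonneg by (intro mult_right_mono) auto
    then have "pdens \<mu> s D (Qs (Suc j)) \<le> pdens \<mu> s D (Qs j) / 2" using st nd by linarith
    also have "\<dots> \<le> (1/2)^(Suc j) * pdens \<mu> s D (Qs 0)" using Suc by simp
    finally show ?case .
  qed
  show "\<forall>j\<in>{0..n}. Theta \<mu> s (Qs j) \<le> 2 powr (- real j / 2) * pdens \<mu> s (cantor_cubes Q0 ch) (Qs 0)"
  proof
    fix j assume j: "j \<in> {0..n}"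
    have "Theta \<mu> s (Qs j) \<le> pdens \<mu> s D (Qs j)"
    proof (rule Theta_le_pdens)
      show "Qs j \<in> D" using inD j by simp
      then show "finite {P \<in> D. Qs j \<subseteq> P}" using anc_finite[OF cs ne] D_def by simp
      show "\<forall>P\<in>D. bounded P" using cube_bounded[OF cs] D_def by blast
    qed
    also have "\<dots> \<le> (1/2)^j * pdens \<mu> s D (Qs 0)" using decay j by simp
    also have "\<dots> \<le> 2 powr (- real j / 2) * pdens \<mu> s D (Qs 0)"
    proof (rule mult_right_mono)
      show "0 \<le> pdens \<mu> s D (Qs 0)"
      proof (rule pdens_nonneg)
        show "\<forall>P\<in>D. bounded P" using cube_bounded[OF cs] D_def by blast
        show "bounded (Qs 0)" using cube_bounded[OF cs q0] .
      qed
    next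
      have "(1/2::real)^j = 1 / 2^j" by (rule power_one_over)
      also have "\<dots> = 1 / 2 powr real j" by (simp only: powr_realpow[of 2 j] zero_less_numeral)
      also have "\<dots> = 2 powr (- real j)" by (rule powr_minus_divide[symmetric])
      also have "\<dots> \<le> 2 powr (- real j / 2)" by (intro powr_mono) auto
      finally show "(1/2::real)^j \<le> 2 powr (- real j / 2)" .
    qed
    finally show "Theta \<mu> s (Qs j) \<le> 2 powr (- real j / 2) * pdens \<mu> s (cantor_cubes Q0 ch) (Qs 0)"
      unfolding D_def .
  qed
qed

end
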